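(* Let $X$ be a compact $\ell_1$-convex subset of $\mathbb{R}^n$ and $\lambda\geq 0$. Then for $0\leq k\leq n$, \[ V_k(X+\lambda Q_n)=\sum_{i=0}^k \binom{n-i}{n-k} V_i(X)\lambda^{k-i}, \] and in particular $\mathrm{Vol}(X+\lambda Q_n)=\sum_{i=0}^n V_i(X)\lambda^{n-i}$.
   Context: $Q_n=[-\tfrac12,\tfrac12]^n$ is the unit cube and $+$ is Minkowski sum. A subset $X\subseteq\mathbb{R}^n$ is $\ell_1$-convex if for all $x,x'\in X$, with $D=\sum_i|x_i-x'_i|$, there is a map $\gamma\colon[0,D]\to X$ with $\gamma(0)=x$, $\gamma(D)=x'$ preserving distances for the $\ell_1$ metric $d(x,y)=\sum_i|x_i-y_i|$. For $0\le i\le n$, $G_{n,i}$ denotes the set of $i$-dimensional coordinate subspaces of $\mathbb{R}^n$ (spanned by $i$ standard basis vectors), $\pi_P$ orthogonal projection onto $P$, and the $i$th $\ell_1$-intrinsic volume of a compact $\ell_1$-convex set $Y$ is $V_i(Y)=\sum_{P\in G_{n,i}}\mathrm{Vol}_i(\pi_PY)$ with $\mathrm{Vol}_i$ Lebesgue measure on $P$. (It is known that $X+\lambda Q_n$ is again compact $\ell_1$-convex.) *)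

theory Defs
  imports "HOL-Analysis.Analysis"
begin

text \<open>The l1 distance on R^n, with R^n rendered as real^'n.\<close>
definition l1_dist :: "real^'n \<Rightarrow> real^'n \<Rightarrow> real" where
  "l1_dist x y = (\<Sum>i\<in>UNIV. \<bar>x$i - y$i\<bar>)"

text \<open>l1-convexity: any two points are joined by an l1-geodesic inside X.\<close>
definition l1_convex :: "(real^'n) set \<Rightarrow> bool" where
  "l1_convex X \<longleftrightarrow> (\<forall>x\<in>X. \<forall>x'\<in>X. \<exists>\<gamma> :: real \<Rightarrow> real^'n.
      \<gamma> 0 = x \<and> \<gamma> (l1_dist x x') = x' \<and> \<gamma> ` {0..l1_dist x x'} \<subseteq> X \<and>
      (\<forall>s\<in>{0..l1_dist x x'}. \<forall>t\<in>{0..l1_dist x x'}. l1_dist (\<gamma> s) (\<gamma> t) = \<bar>s - t\<bar>))"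

text \<open>The unit cube Q_n = [-1/2,1/2]^n.\<close>
definition unit_cube :: "(real^'n) set" where
  "unit_cube = {x. \<forall>i. \<bar>x$i\<bar> \<le> 1/2}"

text \<open>Minkowski sum.\<close>
definition minkowski_sum :: "(real^'n) set \<Rightarrow> (real^'n) set \<Rightarrow> (real^'n) set" where
  "minkowski_sum A B = {a + b | a b. a \<in> A \<and> b \<in> B}"

text \<open>Orthogonal projection onto the coordinate subspace spanned by the coordinates in P,
  identified with the space of functions P \<rightarrow> R (extensional), whose Lebesgue measure is
  the product measure PiM P (\<lambda>_. lborel).\<close>
definition coord_proj :: "'n set \<Rightarrow> real^'n \<Rightarrow> ('n \<Rightarrow> real)" where
  "coord_proj P x = restrict (\<lambda>j. x$j) P"

text \<open>i-dimensional volume of the projection of Y onto the coordinate subspace P.\<close>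
definition proj_vol :: "'n set \<Rightarrow> (real^'n) set \<Rightarrow> real" where
  "proj_vol P Y = measure (PiM P (\<lambda>_. lborel)) (coord_proj P ` Y)"

text \<open>i-th l1-intrinsic volume: sum over the i-dimensional coordinate subspaces.\<close>
definition l1_intrinsic_volume :: "nat \<Rightarrow> (real^'n) set \<Rightarrow> real" where
  "l1_intrinsic_volume i Y = (\<Sum>P\<in>{P :: 'n set. card P = i}. proj_vol P Y)"

end

theory Submission
  imports Defs
begin
definition boxpath :: "(real^'n) set \<Rightarrow> bool" where
"boxpath X \<longleftrightarrow> (\<forall>x\<in>X. \<forall>x'\<in>X. \<exists>(D::real) \<gamma>. 0 \<le> D \<and> (\<forall>j. continuous_on {0..D} (\<lambda>t. \<gamma> t $ j))
   \<and> \<gamma> 0 = x \<and> \<gamma> D = x' \<and> \<gamma> ` {0..D} \<subseteq> X \<and>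
   (\<forall>t\<in>{0..D}. \<forall>i. min (x$i) (x'$i) \<le> \<gamma> t $ i \<and> \<gamma> t $ i \<le> max (x$i) (x'$i)))"

lemma l1_dist_nonneg: "0 \<le> l1_dist x y"
  unfolding l1_dist_def by (auto intro: sum_nonneg)

lemma between_abs: "\<bar>a - b\<bar> + \<bar>b - c\<bar> = \<bar>a - (c::real)\<bar> \<Longrightarrow> min a c \<le> b \<and> b \<le> max a c"
  by (auto simp: abs_if min_def max_def split: if_splits)

lemma l1_convex_boxpath:
  assumes "l1_convex X" shows "boxpath X"
  unfolding boxpath_def
proof (intro ballI)
  fix x x' assume xX: "x \<in> X" and x'X: "x' \<in> X"
  define D where "D = l1_dist x x'"
  obtain \<gamma> where g0: "\<gamma> 0 = x" and gD: "\<gamma> D = x'" and gX: "\<gamma> ` {0..D} \<subseteq> X"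
    and gd: "\<forall>s\<in>{0..D}. \<forall>t\<in>{0..D}. l1_dist (\<gamma> s) (\<gamma> t) = \<bar>s - t\<bar>"
    using assms xX x'X unfolding l1_convex_def D_def by blast
  have D0: "0 \<le> D" unfolding D_def by (rule l1_dist_nonneg)
  have cont: "continuous_on {0..D} (\<lambda>t. \<gamma> t $ j)" for j
    unfolding continuous_on_iff
  proof (intro ballI allI impI)
    fix s e assume s: "s \<in> {0..D}" and e: "0 < (e::real)"
    show "\<exists>d>0. \<forall>t\<in>{0..D}. dist t s < d \<longrightarrow> dist (\<gamma> t $ j) (\<gamma> s $ j) < e"
    proof (intro exI[of _ e] conjI ballI impI e)
      fix t assume t: "t \<in> {0..D}" and ts: "dist t s < e"
      have "\<bar>\<gamma> t $ j - \<gamma> s $ j\<bar> \<le> l1_dist (\<gamma> t) (\<gamma> s)"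
        unfolding l1_dist_def by (rule member_le_sum) auto
      also have "\<dots> = \<bar>t - s\<bar>" using gd s t by auto
      finally show "dist (\<gamma> t $ j) (\<gamma> s $ j) < e" using ts by (simp add: dist_real_def)
    qed
  qed
  have btw: "min (x$i) (x'$i) \<le> \<gamma> t $ i \<and> \<gamma> t $ i \<le> max (x$i) (x'$i)" if t: "t \<in> {0..D}" for t i
  proof -
    have "l1_dist x (\<gamma> t) = t" using gd[rule_format, of 0 t] t g0 D0 by auto
    moreover have "l1_dist (\<gamma> t) x' = D - t" using gd[rule_format, of t D] t gD D0 by auto
    ultimately have eq: "(\<Sum>i\<in>UNIV. \<bar>x$i - \<gamma> t $ i\<bar> + \<bar>\<gamma> t $ i - x'$i\<bar>) = (\<Sum>i\<in>UNIV. \<bar>x$i - x'$i\<bar>)"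
      unfolding D_def l1_dist_def by (simp add: sum.distrib)
    have "\<bar>x$i - \<gamma> t $ i\<bar> + \<bar>\<gamma> t $ i - x'$i\<bar> = \<bar>x$i - x'$i\<bar>"
    proof (rule ccontr)
      assume ne: "\<not> ?thesis"
      have "(\<Sum>i\<in>UNIV. \<bar>x$i - x'$i\<bar>) < (\<Sum>i\<in>UNIV. \<bar>x$i - \<gamma> t $ i\<bar> + \<bar>\<gamma> t $ i - x'$i\<bar>)"
        apply (rule sum_strict_mono_ex1)
        using ne abs_triangle_ineq[of "x$i - \<gamma> t $ i" "\<gamma> t $ i - x'$i"]
        by (auto intro: order.trans[OF _ abs_triangle_ineq] intro!: exI[of _ i])
      with eq show False by simp
    qed
    then show ?thesis by (rule between_abs)
  qed
  show "\<exists>(D::real) \<gamma>. 0 \<le> D \<and> (\<forall>j. continuous_on {0..D} (\<lambda>t. \<gamma> t $ j))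
   \<and> \<gamma> 0 = x \<and> \<gamma> D = x' \<and> \<gamma> ` {0..D} \<subseteq> X \<and>
   (\<forall>t\<in>{0..D}. \<forall>i. min (x$i) (x'$i) \<le> \<gamma> t $ i \<and> \<gamma> t $ i \<le> max (x$i) (x'$i))"
    using D0 cont g0 gD gX btw by blast
qed

definition Bx :: "('n \<Rightarrow> real) \<Rightarrow> (real^'n) set" where
  "Bx a = {b. \<forall>i. \<bar>b$i\<bar> \<le> a i}"

definition Tset :: "(real^'n) set \<Rightarrow> ('n \<Rightarrow> real) \<Rightarrow> (real^'n) set" where
  "Tset X a = minkowski_sum X (Bx a)"

definition fib :: "'n set \<Rightarrow> 'n \<Rightarrow> (real^'n) set \<Rightarrow> ('n \<Rightarrow> real) \<Rightarrow> ('n \<Rightarrow> real) \<Rightarrow> real set" where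
  "fib P j X a g = {y. g(j:=y) \<in> coord_proj P ` Tset X a}"

lemma coord_proj_app: "coord_proj P z i = (if i \<in> P then z$i else undefined)"
  by (simp add: coord_proj_def)

lemma fib_convex:
  assumes bp: "boxpath X" and a: "\<forall>i. 0 \<le> a i" and jP: "j \<in> P"
    and y1: "y1 \<in> fib P j X a g" and y2: "y2 \<in> fib P j X a g" and y: "y1 \<le> y" "y \<le> y2"
  shows "y \<in> fib P j X a g"
proof -
  obtain x b where xX: "x \<in> X" and b: "b \<in> Bx a" and e1: "g(j:=y1) = coord_proj P (x + b)"
    using y1 unfolding fib_def Tset_def minkowski_sum_def by blast
  obtain x' b' where x'X: "x' \<in> X" and b': "b' \<in> Bx a" and e2: "g(j:=y2) = coord_proj P (x' + b')"
    using y2 unfolding fib_def Tset_def minkowski_sum_def by blast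
  have g1: "g i = x$i + b$i" if "i \<in> P" "i \<noteq> j" for i
    using fun_cong[OF e1, of i] that by (simp add: coord_proj_app)
  have g2: "g i = x'$i + b'$i" if "i \<in> P" "i \<noteq> j" for i
    using fun_cong[OF e2, of i] that by (simp add: coord_proj_app)
  have g3: "g i = undefined" if "i \<notin> P" for i
    using fun_cong[OF e1, of i] that jP by (auto simp: coord_proj_app split: if_splits)
  have yj1: "y1 = x$j + b$j" using fun_cong[OF e1, of j] jP by (simp add: coord_proj_app)
  have yj2: "y2 = x'$j + b'$j" using fun_cong[OF e2, of j] jP by (simp add: coord_proj_app)
  have bb: "\<bar>b$i\<bar> \<le> a i" "\<bar>b'$i\<bar> \<le> a i" for i using b b' by (auto simp: Bx_def)
  obtain D :: real and \<gamma> where D: "0 \<le> D" and cont: "\<forall>j. continuous_on {0..D} (\<lambda>t. \<gamma> t $ j)"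
    and g0: "\<gamma> 0 = x" and gD: "\<gamma> D = x'" and gX: "\<gamma> ` {0..D} \<subseteq> X"
    and btw: "\<forall>t\<in>{0..D}. \<forall>i. min (x$i) (x'$i) \<le> \<gamma> t $ i \<and> \<gamma> t $ i \<le> max (x$i) (x'$i)"
    using bp[unfolded boxpath_def, rule_format, OF xX x'X] by blast
  obtain t where t: "t \<in> {0..D}" and tj: "\<bar>y - \<gamma> t $ j\<bar> \<le> a j"
  proof (cases "\<bar>y - x$j\<bar> \<le> a j")
    case True then show ?thesis using that[of 0] D g0 by auto
  next
    case F1: False
    show ?thesis
    proof (cases "\<bar>y - x'$j\<bar> \<le> a j")
      case True then show ?thesis using that[of D] D gD by auto
    next
      case False
      have "x$j \<le> y" "y \<le> x'$j" using F1 False bb[of j] yj1 yj2 y by (auto simp: abs_if split: if_splits)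
      then obtain t where "0 \<le> t" "t \<le> D" "\<gamma> t $ j = y"
        using IVT'[of "\<lambda>t. \<gamma> t $ j" 0 y D] cont g0 gD D by auto
      then show ?thesis using that[of t] a by auto
    qed
  qed
  define b'' where "b'' = (\<chi> i. if i \<in> P then (g(j:=y)) i - \<gamma> t $ i else 0)"
  have "b'' \<in> Bx a"
    unfolding Bx_def
  proof (intro CollectI allI)
    fix i
    show "\<bar>b'' $ i\<bar> \<le> a i"
    proof (cases "i \<in> P")
      case False then show ?thesis using a by (simp add: b''_def)
    next
      case iP: True
      show ?thesis
      proof (cases "i = j")
        case True then show ?thesis using tj iP by (simp add: b''_def)
      next
        case False
        have "min (x$i) (x'$i) \<le> \<gamma> t $ i \<and> \<gamma> t $ i \<le> max (x$i) (x'$i)" using btw t by blast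
        then show ?thesis using False iP g1[OF iP False] g2[OF iP False] bb[of i]
          by (simp add: b''_def abs_if min_def max_def split: if_splits) linarith?
      qed
    qed
  qed
  moreover have "\<gamma> t \<in> X" using gX t by blast
  moreover have "g(j:=y) = coord_proj P (\<gamma> t + b'')"
  proof
    fix i show "(g(j:=y)) i = coord_proj P (\<gamma> t + b'') i"
      using g3 jP by (auto simp: coord_proj_app b''_def)
  qed
  ultimately show ?thesis unfolding fib_def Tset_def minkowski_sum_def by blast
qed

lemma Bx_cbox: "Bx a = cbox (-(\<chi> i. a i)) (\<chi> i. a i)"
proof -
  have "\<bar>x\<bar> \<le> y \<longleftrightarrow> - y \<le> x \<and> x \<le> (y::real)" for x y by auto
  then show ?thesis unfolding Bx_def set_eq_iff mem_box_cart by simp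
qed

lemma compact_Tset: "compact X \<Longrightarrow> compact (Tset X a)"
  unfolding Tset_def minkowski_sum_def Bx_cbox by (intro compact_sums) auto

lemma fib_eq_image:
  assumes jP: "j \<in> P" and g: "g \<in> extensional (P - {j})"
  shows "fib P j X a g = (\<lambda>z. z$j) ` {z\<in>Tset X a. \<forall>i\<in>P-{j}. z$i = g i}"
proof safe
  fix y assume "y \<in> fib P j X a g"
  then obtain z where z: "z \<in> Tset X a" "g(j:=y) = coord_proj P z" unfolding fib_def by blast
  have "z$j = y" using fun_cong[OF z(2), of j] jP by (simp add: coord_proj_app)
  moreover have "\<forall>i\<in>P-{j}. z$i = g i"
  proof
    fix i assume "i \<in> P-{j}" then show "z$i = g i" using fun_cong[OF z(2), of i] by (simp add: coord_proj_app)
  qed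
  ultimately show "y \<in> (\<lambda>z. z$j) ` {z\<in>Tset X a. \<forall>i\<in>P-{j}. z$i = g i}" using z(1) by blast
next
  fix z assume z: "z \<in> Tset X a" "\<forall>i\<in>P-{j}. z$i = g i"
  have "g(j := z$j) = coord_proj P z"
  proof
    fix i show "(g(j := z$j)) i = coord_proj P z i"
      using z(2) g jP by (auto simp: coord_proj_app extensional_def)
  qed
  then show "z$j \<in> fib P j X a g" using z(1) unfolding fib_def by blast
qed

lemma fib_compact:
  fixes X :: "(real^'n) set"
  assumes "compact X" "j \<in> P" "g \<in> extensional (P - {j})"
  shows "compact (fib P j X a g)"
proof -
  have "closed {z::real^'n. \<forall>i\<in>P-{j}. z$i = g i}"
    by (simp add: Collect_ball_eq closed_INT closed_Collect_eq continuous_on_component continuous_on_id)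
  then have "compact {z\<in>Tset X a. \<forall>i\<in>P-{j}. z$i = g i}"
    using compact_Tset[OF assms(1), of a] compact_Int_closed by (simp add: Collect_conj_eq)
  then show ?thesis
    unfolding fib_eq_image[OF assms(2,3)]
    by (intro compact_continuous_image continuous_on_component continuous_on_id)
qed

lemma fib_nonempty:
  assumes jP: "j \<in> P" and g: "g \<in> extensional (P - {j})"
  shows "fib P j X a g \<noteq> {} \<longleftrightarrow> g \<in> coord_proj (P - {j}) ` Tset X a"
proof
  assume "fib P j X a g \<noteq> {}"
  then obtain z where z: "z \<in> Tset X a" "\<forall>i\<in>P-{j}. z$i = g i"
    unfolding fib_eq_image[OF assms] by blast
  have "g = coord_proj (P - {j}) z"
  proof
    fix i show "g i = coord_proj (P - {j}) z i" using z(2) g by (auto simp: coord_proj_app extensional_def)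
  qed
  then show "g \<in> coord_proj (P - {j}) ` Tset X a" using z(1) by blast
next
  assume "g \<in> coord_proj (P - {j}) ` Tset X a"
  then obtain z where z: "z \<in> Tset X a" "g = coord_proj (P - {j}) z" by blast
  then have "z \<in> {z\<in>Tset X a. \<forall>i\<in>P-{j}. z$i = g i}" by (auto simp: coord_proj_app)
  then show "fib P j X a g \<noteq> {}" unfolding fib_eq_image[OF assms] by blast
qed

lemma fib_sweep:
  assumes jP: "j \<in> P" and aj: "a j = 0"
  shows "fib P j X (a(j:=c)) g = {y. \<exists>t. \<bar>t\<bar> \<le> c \<and> y - t \<in> fib P j X a g}"
proof safe
  fix y assume "y \<in> fib P j X (a(j:=c)) g"
  then obtain x b' where x: "x \<in> X" and b': "b' \<in> Bx (a(j:=c))" and e: "g(j:=y) = coord_proj P (x + b')"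
    unfolding fib_def Tset_def minkowski_sum_def by blast
  define b where "b = (\<chi> i. if i = j then 0 else b'$i)"
  have yj: "y = x$j + b'$j" using fun_cong[OF e, of j] jP by (simp add: coord_proj_app)
  have "b \<in> Bx a"
    unfolding Bx_def
  proof (intro CollectI allI)
    fix i show "\<bar>b$i\<bar> \<le> a i" using b' aj by (cases "i = j") (auto simp: Bx_def b_def dest: spec[of _ i])
  qed
  moreover have "g(j := y - b'$j) = coord_proj P (x + b)"
  proof
    fix i show "(g(j := y - b'$j)) i = coord_proj P (x + b) i"
    proof (cases "i = j")
      case True then show ?thesis using yj jP by (simp add: coord_proj_app b_def)
    next
      case False then show ?thesis using fun_cong[OF e, of i] by (simp add: coord_proj_app b_def)
    qed
  qed
  ultimately have "y - b'$j \<in> fib P j X a g" using x unfolding fib_def Tset_def minkowski_sum_def by blast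
  moreover have "\<bar>b'$j\<bar> \<le> c" using b' by (auto simp: Bx_def dest: spec[of _ j])
  ultimately show "\<exists>t. \<bar>t\<bar> \<le> c \<and> y - t \<in> fib P j X a g" by blast
next
  fix y t assume t: "\<bar>t\<bar> \<le> c" and yt: "y - t \<in> fib P j X a g"
  then obtain x b where x: "x \<in> X" and b: "b \<in> Bx a" and e: "g(j:=y - t) = coord_proj P (x + b)"
    unfolding fib_def Tset_def minkowski_sum_def by blast
  define b' where "b' = (\<chi> i. if i = j then t else b$i)"
  have bj: "b$j = 0" using b aj by (auto simp: Bx_def dest: spec[of _ j])
  have yj: "y - t = x$j + b$j" using fun_cong[OF e, of j] jP by (simp add: coord_proj_app)
  have "b' \<in> Bx (a(j:=c))" using b t by (auto simp: Bx_def b'_def)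
  moreover have "g(j := y) = coord_proj P (x + b')"
  proof
    fix i show "(g(j := y)) i = coord_proj P (x + b') i"
    proof (cases "i = j")
      case True then show ?thesis using yj bj jP by (simp add: coord_proj_app b'_def)
    next
      case False then show ?thesis using fun_cong[OF e, of i] by (simp add: coord_proj_app b'_def)
    qed
  qed
  ultimately show "y \<in> fib P j X (a(j:=c)) g" using x unfolding fib_def Tset_def minkowski_sum_def by blast
qed

lemma interval_sweep_measure:
  fixes F :: "real set"
  assumes "compact F" and conv: "\<And>y1 y2 y. y1 \<in> F \<Longrightarrow> y2 \<in> F \<Longrightarrow> y1 \<le> y \<Longrightarrow> y \<le> y2 \<Longrightarrow> y \<in> F"
    and c: "0 \<le> c"
  shows "emeasure lborel {y. \<exists>t. \<bar>t\<bar> \<le> c \<and> y - t \<in> F} =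
         emeasure lborel F + (if F = {} then 0 else ennreal (2 * c))"
proof (cases "F = {}")
  case True then show ?thesis by simp
next
  case False
  have "is_interval F" using conv unfolding is_interval_1 by blast
  then have "connected F" by (simp add: is_interval_connected)
  then obtain l u where F: "F = {l..u}" using connected_compact_interval_1 assms(1) by blast
  with False have lu: "l \<le> u" by auto
  have "{y. \<exists>t. \<bar>t\<bar> \<le> c \<and> y - t \<in> F} = {l - c..u + c}"
  proof (rule set_eqI, rule iffI)
    fix y assume "y \<in> {y. \<exists>t. \<bar>t\<bar> \<le> c \<and> y - t \<in> F}"
    then obtain t where "\<bar>t\<bar> \<le> c" "l \<le> y - t" "y - t \<le> u" unfolding F by auto
    then show "y \<in> {l - c..u + c}" by (simp add: abs_le_iff)
  next
    fix y assume y: "y \<in> {l - c..u + c}"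
    define t where "t = (if y < l then y - l else if y > u then y - u else 0)"
    have "\<bar>t\<bar> \<le> c" "l \<le> y - t" "y - t \<le> u" using y lu c unfolding t_def by auto
    then show "y \<in> {y. \<exists>t. \<bar>t\<bar> \<le> c \<and> y - t \<in> F}" unfolding F by auto
  qed
  moreover have "emeasure lborel {l - c..u + c} = ennreal ((u - l) + 2 * c)" using lu c by simp
  moreover have "ennreal ((u - l) + 2 * c) = ennreal (u - l) + ennreal (2 * c)" using lu c by (simp add: ennreal_plus)
  ultimately show ?thesis using lu c False F by simp
qed

abbreviation MM :: "'n set \<Rightarrow> ('n \<Rightarrow> real) measure" where
  "MM P \<equiv> PiM P (\<lambda>_. lborel)"

definition emb :: "'n set \<Rightarrow> ('n \<Rightarrow> real) \<Rightarrow> real^'n" where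
  "emb P f = (\<chi> i. if i \<in> P then f i else 0)"

definition flat :: "'n set \<Rightarrow> real^'n \<Rightarrow> real^'n" where
  "flat P z = (\<chi> i. if i \<in> P then z$i else 0)"

lemma Basis_cart_ex: "b \<in> (Basis :: (real^'n) set) \<Longrightarrow> \<exists>i. b = axis i 1"
  unfolding Basis_vec_def Basis_real_def by blast
lemma emb_inner_axis: "(\<lambda>x. emb P x \<bullet> axis i 1) = (\<lambda>x. if i \<in> P then x i else 0)"
  by (simp add: emb_def inner_axis fun_eq_iff)
lemma if_comp_meas: "(\<lambda>x. if i \<in> P then x i else 0) \<in> borel_measurable (MM P)"
  proof (cases "i \<in> P")
    case True
    then have "(\<lambda>x. x i) \<in> measurable (MM P) lborel" by (rule measurable_component_singleton)
    then show "(\<lambda>x. if i \<in> P then x i else 0) \<in> borel_measurable (MM P)" using True by simp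
  qed simp
lemma emb_measurable: fixes P :: "'n::finite set" shows "emb P \<in> borel_measurable (MM P)"
proof (rule iffD2[OF borel_measurable_euclidean_space], rule ballI)
  fix b :: "real^'n" assume "b \<in> Basis"
  then obtain i where b: "b = axis i 1" using Basis_cart_ex by blast
  show "(\<lambda>x. emb P x \<bullet> b) \<in> borel_measurable (MM P)"
    unfolding b emb_inner_axis by (rule if_comp_meas)
qed

lemma coord_proj_sets:
  fixes T :: "(real^'n) set"
  assumes "compact T"
  shows "coord_proj P ` T \<in> sets (MM P)"
proof -
  have "compact (flat P ` T)"
    unfolding flat_def
    apply (intro compact_continuous_image assms continuous_on_vec_lambda)
    subgoal for i by (cases "i \<in> P") (simp_all add: continuous_on_component continuous_on_id)
    done
  then have cl: "flat P ` T \<in> sets borel" by (intro borel_closed compact_imp_closed)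
  have eq: "coord_proj P ` T = emb P -` (flat P ` T) \<inter> space (MM P)"
  proof (rule set_eqI, rule iffI)
    fix f assume "f \<in> coord_proj P ` T"
    then obtain z where z: "z \<in> T" "f = coord_proj P z" by blast
    have "emb P f = flat P z" using z(2) by (simp add: emb_def flat_def coord_proj_app vec_eq_iff)
    moreover have "f \<in> space (MM P)" using z(2) by (simp add: space_PiM coord_proj_def)
    ultimately show "f \<in> emb P -` (flat P ` T) \<inter> space (MM P)" using z(1) by blast
  next
    fix f assume "f \<in> emb P -` (flat P ` T) \<inter> space (MM P)"
    then obtain z where f: "f \<in> space (MM P)" and z: "z \<in> T" and e: "emb P f = flat P z" by blast
    have "f = coord_proj P z"
    proof
      fix i show "f i = coord_proj P z i"
      proof (cases "i \<in> P")
        case True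
        then show ?thesis using arg_cong[OF e, of "\<lambda>v. v$i"] by (simp add: emb_def flat_def coord_proj_app)
      next
        case False
        then show ?thesis using f by (simp add: space_PiM coord_proj_app PiE_def extensional_def)
      qed
    qed
    then show "f \<in> coord_proj P ` T" using z by blast
  qed
  show ?thesis unfolding eq by (rule measurable_sets[OF emb_measurable cl])
qed

lemma upd_measurable:
  assumes "j \<notin> Q"
  shows "(\<lambda>(g, y). g(j := y)) \<in> measurable (MM Q \<Otimes>\<^sub>M lborel) (MM (insert j Q))"
proof -
  have "(\<lambda>\<omega> i. (case \<omega> of (g, y) \<Rightarrow> g(j := y)) i) \<in> measurable (MM Q \<Otimes>\<^sub>M lborel) (MM (insert j Q))"
  proof (rule measurable_PiM_single')
    fix i assume i: "i \<in> insert j Q"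
    show "(\<lambda>\<omega>. (case \<omega> of (g, y) \<Rightarrow> g(j := y)) i) \<in> measurable (MM Q \<Otimes>\<^sub>M lborel) lborel"
    proof (cases "i = j")
      case True
      then have e: "(\<lambda>\<omega>. (case \<omega> of (g, y) \<Rightarrow> g(j := y)) i) = snd" by (auto simp: fun_eq_iff split: prod.split)
      show ?thesis unfolding e by (rule measurable_snd)
    next
      case False
      then have iQ: "i \<in> Q" using i by blast
      have e: "(\<lambda>\<omega>. (case \<omega> of (g, y) \<Rightarrow> g(j := y)) i) = (\<lambda>\<omega>. fst \<omega> i)" using False by (simp add: fun_eq_iff split: prod.split)
      show ?thesis unfolding e
        by (rule measurable_compose[OF measurable_fst measurable_component_singleton[OF iQ]])
    qed
  next
    show "(\<lambda>\<omega> i. (case \<omega> of (g, y) \<Rightarrow> g(j := y)) i) \<in> space (MM Q \<Otimes>\<^sub>M lborel) \<rightarrow> (\<Pi>\<^sub>E i\<in>insert j Q. space lborel)"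
      using assms by (auto simp: space_pair_measure space_PiM PiE_def extensional_def split: prod.split)
  qed
  then show ?thesis by (simp add: case_prod_beta' cong: measurable_cong)
qed

lemma fib_integral_aux:
  fixes X :: "(real^'n::finite) set"
  assumes Q: "finite Q" "j \<notin> Q" and X: "compact X"
  shows "emeasure (MM (insert j Q)) (coord_proj (insert j Q) ` Tset X a)
          = (\<integral>\<^sup>+g. emeasure lborel (fib (insert j Q) j X a g) \<partial>MM Q)"
    and "(\<lambda>g. emeasure lborel (fib (insert j Q) j X a g)) \<in> borel_measurable (MM Q)"
proof -
  interpret product_sigma_finite "\<lambda>_::'n. lborel :: real measure" by standard
  define S where "S = coord_proj (insert j Q) ` Tset X a"
  have S: "S \<in> sets (MM (insert j Q))" unfolding S_def by (rule coord_proj_sets[OF compact_Tset[OF X]])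
  have fibeq: "(\<integral>\<^sup>+y. indicator S (g(j:=y)) \<partial>lborel) = emeasure lborel (fib (insert j Q) j X a g)"
    if g: "g \<in> space (MM Q)" for g
  proof -
    have ext: "g \<in> extensional (insert j Q - {j})" using g Q by (simp add: space_PiM PiE_def)
    have "(\<lambda>y. indicator S (g(j:=y)) :: ennreal) = indicator (fib (insert j Q) j X a g)"
      by (auto simp: fib_def S_def indicator_def fun_eq_iff)
    moreover have "fib (insert j Q) j X a g \<in> sets lborel"
      using fib_compact[OF X _ ext, of a] by (simp add: borel_closed compact_imp_closed)
    ultimately show ?thesis by simp
  qed
  have "emeasure (MM (insert j Q)) S = (\<integral>\<^sup>+x. indicator S x \<partial>MM (insert j Q))" using S by simp
  also have "\<dots> = (\<integral>\<^sup>+g. (\<integral>\<^sup>+y. indicator S (g(j:=y)) \<partial>lborel) \<partial>MM Q)"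
    by (rule product_nn_integral_insert[OF Q]) (rule borel_measurable_indicator[OF S])
  also have "\<dots> = (\<integral>\<^sup>+g. emeasure lborel (fib (insert j Q) j X a g) \<partial>MM Q)"
    by (rule nn_integral_cong) (rule fibeq)
  finally show "emeasure (MM (insert j Q)) (coord_proj (insert j Q) ` Tset X a)
          = (\<integral>\<^sup>+g. emeasure lborel (fib (insert j Q) j X a g) \<partial>MM Q)" unfolding S_def .
  have m: "case_prod (\<lambda>g y. indicator S (g(j:=y)) :: ennreal) \<in> borel_measurable (MM Q \<Otimes>\<^sub>M lborel)"
  proof -
    have "case_prod (\<lambda>g y. indicator S (g(j:=y)) :: ennreal) = indicator S \<circ> (\<lambda>(g, y). g(j := y))"
      by (auto simp: fun_eq_iff)
    moreover have "indicator S \<circ> (\<lambda>(g, y). g(j := y)) \<in> borel_measurable (MM Q \<Otimes>\<^sub>M lborel)"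
      by (rule measurable_comp[OF upd_measurable[OF Q(2)] borel_measurable_indicator[OF S]])
    ultimately show ?thesis by simp
  qed
  have "(\<lambda>g. \<integral>\<^sup>+y. indicator S (g(j:=y)) \<partial>lborel) \<in> borel_measurable (MM Q)"
    by (rule lborel.borel_measurable_nn_integral[OF m])
  then show "(\<lambda>g. emeasure lborel (fib (insert j Q) j X a g)) \<in> borel_measurable (MM Q)"
    by (rule measurable_cong[THEN iffD1, rotated]) (rule fibeq)
qed

lemma step_emeasure:
  fixes X :: "(real^'n::finite) set"
  assumes P: "finite P" "j \<in> P" and X: "compact X" "boxpath X"
    and a: "\<forall>i. 0 \<le> a i" "a j = 0" and c: "0 \<le> c"
  shows "emeasure (MM P) (coord_proj P ` Tset X (a(j:=c))) =
         emeasure (MM P) (coord_proj P ` Tset X a)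
         + ennreal (2*c) * emeasure (MM (P - {j})) (coord_proj (P - {j}) ` Tset X a)"
proof -
  define Q where "Q = P - {j}"
  have PQ: "P = insert j Q" using P unfolding Q_def by auto
  have Q: "finite Q" "j \<notin> Q" using P unfolding Q_def by auto
  have SQ: "coord_proj Q ` Tset X a \<in> sets (MM Q)" by (rule coord_proj_sets[OF compact_Tset[OF X(1)]])
  have "emeasure (MM P) (coord_proj P ` Tset X (a(j:=c))) =
        (\<integral>\<^sup>+g. emeasure lborel (fib P j X (a(j:=c)) g) \<partial>MM Q)"
    unfolding PQ by (rule fib_integral_aux(1)[OF Q X(1)])
  also have "\<dots> = (\<integral>\<^sup>+g. emeasure lborel (fib P j X a g) + ennreal (2*c) * indicator (coord_proj Q ` Tset X a) g \<partial>MM Q)"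
  proof (rule nn_integral_cong)
    fix g assume g: "g \<in> space (MM Q)"
    have ext: "g \<in> extensional (P - {j})" using g unfolding Q_def by (simp add: space_PiM PiE_def)
    have conv: "y \<in> fib P j X a g" if "y1 \<in> fib P j X a g" "y2 \<in> fib P j X a g" "y1 \<le> y" "y \<le> y2" for y1 y2 y
      by (rule fib_convex[OF X(2) a(1) P(2) that])
    have "emeasure lborel (fib P j X (a(j:=c)) g) = emeasure lborel (fib P j X a g) + (if fib P j X a g = {} then 0 else ennreal (2 * c))"
      unfolding fib_sweep[where a=a, OF P(2) a(2)]
      by (rule interval_sweep_measure[OF fib_compact[OF X(1) P(2) ext] conv c])
    also have "(if fib P j X a g = {} then 0 else ennreal (2 * c)) = ennreal (2*c) * indicator (coord_proj Q ` Tset X a) g"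
      using fib_nonempty[OF P(2) ext, of X a] unfolding Q_def by (auto simp: indicator_def)
    finally show "emeasure lborel (fib P j X (a(j:=c)) g) = emeasure lborel (fib P j X a g) + ennreal (2*c) * indicator (coord_proj Q ` Tset X a) g" .
  qed
  also have "\<dots> = (\<integral>\<^sup>+g. emeasure lborel (fib P j X a g) \<partial>MM Q) + (\<integral>\<^sup>+g. ennreal (2*c) * indicator (coord_proj Q ` Tset X a) g \<partial>MM Q)"
    by (rule nn_integral_add) (use fib_integral_aux(2)[OF Q X(1), of a] SQ PQ in auto)
  also have "\<dots> = emeasure (MM P) (coord_proj P ` Tset X a) + ennreal (2*c) * emeasure (MM Q) (coord_proj Q ` Tset X a)"
    using fib_integral_aux(1)[OF Q X(1), of a] SQ PQ by (simp add: nn_integral_cmult_indicator)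
  finally show ?thesis unfolding Q_def .
qed

lemma proj_finite:
  fixes T :: "(real^'n::finite) set"
  assumes "compact T" "finite P"
  shows "emeasure (MM P) (coord_proj P ` T) \<noteq> top"
proof -
  interpret product_sigma_finite "\<lambda>_::'n. lborel :: real measure" by standard
  obtain R where R: "\<forall>z\<in>T. norm z \<le> R" using compact_imp_bounded[OF assms(1)] bounded_iff by blast
  have sub: "coord_proj P ` T \<subseteq> PiE P (\<lambda>_. {-R..R})"
  proof
    fix f assume "f \<in> coord_proj P ` T"
    then obtain z where z: "z \<in> T" "f = coord_proj P z" by blast
    have "\<bar>z$i\<bar> \<le> R" for i using R z(1) component_le_norm_cart[of z i] by fastforce
    then have "-R \<le> z$i \<and> z$i \<le> R" for i by (simp add: abs_le_iff) (metis minus_le_iff)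
    then show "f \<in> PiE P (\<lambda>_. {-R..R})" using z(2) by (auto simp: coord_proj_def)
  qed
  have "emeasure (MM P) (coord_proj P ` T) \<le> emeasure (MM P) (PiE P (\<lambda>_. {-R..R}))"
    by (rule emeasure_mono[OF sub]) (simp add: sets_PiM_I_finite assms(2))
  also have "\<dots> = (\<Prod>i\<in>P. emeasure lborel {-R..R})" by (rule emeasure_PiM[OF assms(2)]) simp
  also have "\<dots> < top" by (simp add: power_less_top_ennreal emeasure_lborel_Icc_eq)
  finally show ?thesis by (simp add: top_unique)
qed

lemma step_measure:
  fixes X :: "(real^'n::finite) set"
  assumes P: "finite P" "j \<in> P" and X: "compact X" "boxpath X"
    and a: "\<forall>i. 0 \<le> a i" "a j = 0" and c: "0 \<le> c"
  shows "measure (MM P) (coord_proj P ` Tset X (a(j:=c))) =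
         measure (MM P) (coord_proj P ` Tset X a)
         + (2*c) * measure (MM (P - {j})) (coord_proj (P - {j}) ` Tset X a)"
proof -
  have f1: "emeasure (MM P) (coord_proj P ` Tset X b) = ennreal (measure (MM P) (coord_proj P ` Tset X b))" for b
    by (rule emeasure_eq_ennreal_measure[OF proj_finite[OF compact_Tset[OF X(1)] P(1)]])
  have f2: "emeasure (MM (P - {j})) (coord_proj (P - {j}) ` Tset X a) = ennreal (measure (MM (P - {j})) (coord_proj (P - {j}) ` Tset X a))"
    by (rule emeasure_eq_ennreal_measure[OF proj_finite[OF compact_Tset[OF X(1)]]]) (simp add: P(1))
  define m' where "m' = measure (MM P) (coord_proj P ` Tset X (a(j:=c)))"
  define mA where "mA = measure (MM P) (coord_proj P ` Tset X a)"
  define mB where "mB = measure (MM (P - {j})) (coord_proj (P - {j}) ` Tset X a)"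
  have E: "ennreal m' = ennreal mA + ennreal (2*c) * ennreal mB"
    using step_emeasure[OF P X a c] unfolding f1 f2 m'_def mA_def mB_def .
  have "ennreal mA + ennreal (2*c) * ennreal mB = ennreal (mA + 2*c*mB)"
    using c by (simp add: ennreal_plus ennreal_mult mA_def mB_def)
  with E have E': "ennreal m' = ennreal (mA + 2*c*mB)" by simp
  have "m' = enn2real (ennreal m')" by (simp add: m'_def)
  also have "\<dots> = mA + 2*c*mB" unfolding E'
    by (rule enn2real_ennreal) (use c in \<open>auto simp: mA_def mB_def\<close>)
  finally show ?thesis unfolding m'_def mA_def mB_def by simp
qed

definition aJ :: "real \<Rightarrow> 'n set \<Rightarrow> 'n \<Rightarrow> real" where
  "aJ lam J = (\<lambda>i. if i \<in> J then lam / 2 else 0)"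

lemma Tset_zero: "Tset X (\<lambda>_. 0) = X"
proof -
  have B0: "Bx (\<lambda>_. 0) = {0}" by (auto simp: Bx_def vec_eq_iff)
  show ?thesis unfolding Tset_def minkowski_sum_def B0 by auto
qed

lemma sweep_formula:
  fixes X :: "(real^'n::finite) set"
  assumes J: "finite J" and X: "compact X" "boxpath X" and lam: "0 \<le> lam"
  shows "J \<subseteq> P \<Longrightarrow> finite P \<Longrightarrow> measure (MM P) (coord_proj P ` Tset X (aJ lam J)) =
           (\<Sum>S\<in>Pow J. measure (MM (P - S)) (coord_proj (P - S) ` X) * lam ^ card S)"
  using J
proof (induction J arbitrary: P rule: finite_induct)
  case empty
  have e: "aJ lam {} = (\<lambda>_. 0)" by (simp add: aJ_def fun_eq_iff)
  show ?case unfolding e Tset_zero by simp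
next
  case (insert j J)
  have jP: "j \<in> P" and JP: "J \<subseteq> P - {j}" using insert by auto
  have a: "\<forall>i. 0 \<le> aJ lam J i" "aJ lam J j = 0" using lam insert(2) by (auto simp: aJ_def)
  have eqa: "aJ lam (insert j J) = (aJ lam J)(j := lam/2)" by (auto simp: aJ_def fun_eq_iff)
  have "measure (MM P) (coord_proj P ` Tset X (aJ lam (insert j J))) =
        measure (MM P) (coord_proj P ` Tset X (aJ lam J))
        + lam * measure (MM (P - {j})) (coord_proj (P - {j}) ` Tset X (aJ lam J))"
    unfolding eqa using step_measure[OF insert(5) jP X a, of "lam/2"] lam by simp
  also have "\<dots> = (\<Sum>S\<in>Pow J. measure (MM (P - S)) (coord_proj (P - S) ` X) * lam ^ card S)
       + lam * (\<Sum>S\<in>Pow J. measure (MM (P - {j} - S)) (coord_proj (P - {j} - S) ` X) * lam ^ card S)"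
    using insert.IH[of P] insert.IH[of "P - {j}"] insert.prems JP by auto
  also have "lam * (\<Sum>S\<in>Pow J. measure (MM (P - {j} - S)) (coord_proj (P - {j} - S) ` X) * lam ^ card S)
      = (\<Sum>S\<in>insert j ` Pow J. measure (MM (P - S)) (coord_proj (P - S) ` X) * lam ^ card S)"
  proof -
    have inj: "inj_on (insert j) (Pow J)" using insert(2) by (auto simp: inj_on_def)
    have "(\<Sum>S\<in>insert j ` Pow J. measure (MM (P - S)) (coord_proj (P - S) ` X) * lam ^ card S)
        = (\<Sum>S\<in>Pow J. measure (MM (P - insert j S)) (coord_proj (P - insert j S) ` X) * lam ^ card (insert j S))"
      by (rule sum.reindex[OF inj, unfolded comp_def])
    also have "\<dots> = (\<Sum>S\<in>Pow J. lam * (measure (MM (P - {j} - S)) (coord_proj (P - {j} - S) ` X) * lam ^ card S))"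
    proof (rule sum.cong[OF refl])
      fix S assume S: "S \<in> Pow J"
      then have "finite S" "j \<notin> S" using insert(1,2) finite_subset by auto
      then have "card (insert j S) = Suc (card S)" by simp
      moreover have "P - insert j S = P - {j} - S" by auto
      ultimately show "measure (MM (P - insert j S)) (coord_proj (P - insert j S) ` X) * lam ^ card (insert j S)
          = lam * (measure (MM (P - {j} - S)) (coord_proj (P - {j} - S) ` X) * lam ^ card S)" by simp
    qed
    finally show ?thesis by (simp add: sum_distrib_left)
  qed
  also have "(\<Sum>S\<in>Pow J. measure (MM (P - S)) (coord_proj (P - S) ` X) * lam ^ card S)
      + (\<Sum>S\<in>insert j ` Pow J. measure (MM (P - S)) (coord_proj (P - S) ` X) * lam ^ card S)
      = (\<Sum>S\<in>Pow (insert j J). measure (MM (P - S)) (coord_proj (P - S) ` X) * lam ^ card S)"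
    unfolding Pow_insert
    by (rule sum.union_disjoint[symmetric]) (use insert(1,2) in auto)
  finally show ?case .
qed

lemma emb_UNIV: "emb UNIV f = vec_lambda f"
  by (simp add: emb_def)

lemma lborel_vec: "lborel = distr (MM (UNIV::'n::finite set)) borel vec_lambda"
proof (rule lborel_eqI)
  interpret product_sigma_finite "\<lambda>_::'n. lborel :: real measure" by standard
  have meas: "(vec_lambda :: ('n \<Rightarrow> real) \<Rightarrow> real^'n) \<in> borel_measurable (MM UNIV)"
    using emb_measurable[of "UNIV :: 'n set"] unfolding emb_UNIV[abs_def] by simp
  fix l u :: "real^'n"
  assume le: "\<And>b. b \<in> Basis \<Longrightarrow> l \<bullet> b \<le> u \<bullet> b"
  have le': "l$i \<le> u$i" for i using le[of "axis i 1"] by (simp add: inner_axis axis_in_Basis_iff)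
  have pre: "vec_lambda -` box l u \<inter> space (MM UNIV) = PiE UNIV (\<lambda>i. {l$i<..<u$i})"
    by (auto simp: space_PiM mem_box_cart PiE_def Pi_def)
  have "emeasure (distr (MM UNIV) borel vec_lambda) (box l u) = emeasure (MM UNIV) (PiE UNIV (\<lambda>i. {l$i<..<u$i}))"
    by (subst emeasure_distr[OF meas]) (simp_all add: pre)
  also have "\<dots> = (\<Prod>i\<in>UNIV. emeasure lborel {l$i<..<u$i})"
    by (rule emeasure_PiM) simp_all
  also have "\<dots> = (\<Prod>i\<in>UNIV. ennreal (u$i - l$i))" using le' by simp
  also have "\<dots> = ennreal (\<Prod>i\<in>UNIV. u$i - l$i)" using le' by (simp add: prod_ennreal)
  also have "(\<Prod>i\<in>UNIV. u$i - l$i) = (\<Prod>b\<in>Basis. (u - l) \<bullet> b)"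
  proof -
    have B: "(Basis :: (real^'n) set) = (\<lambda>i. axis i 1) ` UNIV"
      unfolding Basis_vec_def Basis_real_def by auto
    have inj: "inj (\<lambda>i::'n. axis i (1::real))" by (auto simp: inj_def axis_eq_axis)
    show ?thesis unfolding B prod.reindex[OF inj] by (simp add: inner_axis)
  qed
  finally show "emeasure (distr (MM UNIV) borel vec_lambda) (box l u) = (\<Prod>b\<in>Basis. (u - l) \<bullet> b)" .
qed simp

lemma lebesgue_vol:
  fixes Y :: "(real^'n::finite) set"
  assumes "compact Y"
  shows "measure lebesgue Y = measure (MM UNIV) (coord_proj UNIV ` Y)"
proof -
  have meas: "(vec_lambda :: ('n \<Rightarrow> real) \<Rightarrow> real^'n) \<in> borel_measurable (MM UNIV)"
    using emb_measurable[of "UNIV :: 'n set"] unfolding emb_UNIV[abs_def] by simp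
  have Yb: "Y \<in> sets borel" using assms by (simp add: borel_closed compact_imp_closed)
  have "measure lebesgue Y = measure lborel Y" using Yb by simp
  also have "\<dots> = measure (MM UNIV) (vec_lambda -` Y \<inter> space (MM UNIV))"
    by (subst lborel_vec) (rule measure_distr[OF meas Yb])
  also have "vec_lambda -` Y \<inter> space (MM UNIV) = coord_proj UNIV ` Y"
  proof (rule set_eqI, rule iffI)
    fix f assume "f \<in> vec_lambda -` Y \<inter> space (MM UNIV)"
    then have "vec_lambda f \<in> Y" by simp
    moreover have "f = coord_proj UNIV (vec_lambda f)" by (simp add: coord_proj_def restrict_UNIV)
    ultimately show "f \<in> coord_proj UNIV ` Y" by blast
  next
    fix f assume "f \<in> coord_proj UNIV ` Y"
    then obtain z where "z \<in> Y" "f = coord_proj UNIV z" by blast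
    then show "f \<in> vec_lambda -` Y \<inter> space (MM UNIV)"
      by (simp add: coord_proj_def restrict_UNIV space_PiM)
  qed
  finally show ?thesis .
qed

lemma card_supsets:
  fixes R :: "'n::finite set"
  assumes "card R \<le> k"
  shows "card {P. card P = k \<and> R \<subseteq> P} = (CARD('n) - card R) choose (k - card R)"
proof -
  define A where "A = {P::'n set. card P = k \<and> R \<subseteq> P}"
  define B where "B = {S. S \<subseteq> - R \<and> card S = k - card R}"
  have inj: "inj_on (\<lambda>P. P - R) A"
  proof (rule inj_onI)
    fix P1 P2 assume "P1 \<in> A" "P2 \<in> A" "P1 - R = P2 - R"
    then show "P1 = P2" unfolding A_def by (metis Diff_partition mem_Collect_eq)
  qed
  have img: "(\<lambda>P. P - R) ` A = B"
  proof (rule set_eqI, rule iffI)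
    fix S assume "S \<in> (\<lambda>P. P - R) ` A"
    then obtain P where P: "card P = k" "R \<subseteq> P" "S = P - R" unfolding A_def by blast
    then show "S \<in> B" unfolding B_def by (auto simp: card_Diff_subset)
  next
    fix S assume S: "S \<in> B"
    then have "S \<inter> R = {}" "card S = k - card R" unfolding B_def by auto
    then have "card (S \<union> R) = k" using assms by (simp add: card_Un_disjoint)
    moreover have "S = (S \<union> R) - R" using \<open>S \<inter> R = {}\<close> by auto
    ultimately show "S \<in> (\<lambda>P. P - R) ` A" unfolding A_def by blast
  qed
  have "card A = card B" using card_image[OF inj] img by simp
  also have "card B = card (- R) choose (k - card R)" unfolding B_def by (rule n_subsets) simp
  also have "card (- R) = CARD('n) - card R"
    using card_Diff_subset[of R UNIV] by (simp add: Compl_eq_Diff_UNIV)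
  finally show ?thesis unfolding A_def .
qed

lemma combin:
  fixes v :: "'n::finite set \<Rightarrow> real"
  assumes k: "k \<le> CARD('n)"
  shows "(\<Sum>P\<in>{P. card P = k}. \<Sum>R\<in>Pow P. v R * lam ^ (card P - card R)) =
         (\<Sum>i=0..k. real ((CARD('n) - i) choose (CARD('n) - k)) * (\<Sum>R\<in>{R. card R = i}. v R) * lam ^ (k - i))"
proof -
  define g where "g R = real (card {P. card P = k \<and> R \<subseteq> P}) * (v R * lam ^ (k - card R))" for R :: "'n set"
  have "(\<Sum>P\<in>{P. card P = k}. \<Sum>R\<in>Pow P. v R * lam ^ (card P - card R))
      = (\<Sum>P\<in>{P. card P = k}. \<Sum>R\<in>{R. R \<in> UNIV \<and> R \<subseteq> P}. v R * lam ^ (card P - card R))"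
    by (intro sum.cong) auto
  also have "\<dots> = (\<Sum>R\<in>UNIV. \<Sum>P\<in>{P. P \<in> {P. card P = k} \<and> R \<subseteq> P}. v R * lam ^ (card P - card R))"
    by (rule sum.swap_restrict) simp_all
  also have "\<dots> = (\<Sum>R\<in>UNIV. g R)"
  proof (rule sum.cong[OF refl])
    fix R :: "'n set"
    have "(\<Sum>P\<in>{P. P \<in> {P. card P = k} \<and> R \<subseteq> P}. v R * lam ^ (card P - card R))
        = (\<Sum>P\<in>{P. card P = k \<and> R \<subseteq> P}. v R * lam ^ (k - card R))"
      by (intro sum.cong) auto
    then show "(\<Sum>P\<in>{P. P \<in> {P. card P = k} \<and> R \<subseteq> P}. v R * lam ^ (card P - card R)) = g R"
      by (simp add: g_def)
  qed
  also have "\<dots> = (\<Sum>R\<in>(\<Union>i\<in>{0..k}. {R. card R = i}). g R)"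
  proof (rule sum.mono_neutral_left[symmetric])
    show "\<forall>R\<in>UNIV - (\<Union>i\<in>{0..k}. {R. card R = i}). g R = 0"
    proof
      fix R :: "'n set" assume "R \<in> UNIV - (\<Union>i\<in>{0..k}. {R. card R = i})"
      then have "card R > k" by auto
      then have "\<not> (card P = k \<and> R \<subseteq> P)" for P using card_mono[of P R] by auto
      then have "{P. card P = k \<and> R \<subseteq> P} = {}" by blast
      then show "g R = 0" by (simp add: g_def)
    qed
  qed simp_all
  also have "\<dots> = (\<Sum>i=0..k. \<Sum>R\<in>{R. card R = i}. g R)"
    by (rule sum.UNION_disjoint) auto
  also have "\<dots> = (\<Sum>i=0..k. real ((CARD('n) - i) choose (CARD('n) - k)) * (\<Sum>R\<in>{R. card R = i}. v R) * lam ^ (k - i))"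
  proof (rule sum.cong[OF refl])
    fix i assume i: "i \<in> {0..k}"
    have "(\<Sum>R\<in>{R. card R = i}. g R) = (\<Sum>R\<in>{R. card R = i}. real ((CARD('n) - i) choose (CARD('n) - k)) * v R * lam ^ (k - i))"
    proof (rule sum.cong[OF refl])
      fix R :: "'n set" assume R: "R \<in> {R. card R = i}"
      have "(CARD('n) - i) choose (k - i) = (CARD('n) - i) choose ((CARD('n) - i) - (k - i))"
        by (rule binomial_symmetric) (use i k in auto)
      also have "(CARD('n) - i) - (k - i) = CARD('n) - k" using i k by auto
      finally show "g R = real ((CARD('n) - i) choose (CARD('n) - k)) * v R * lam ^ (k - i)"
        using R i card_supsets[of R k] by (simp add: g_def)
    qed
    then show "(\<Sum>R\<in>{R. card R = i}. g R) = real ((CARD('n) - i) choose (CARD('n) - k)) * (\<Sum>R\<in>{R. card R = i}. v R) * lam ^ (k - i)"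
      by (simp add: sum_distrib_left sum_distrib_right mult.assoc)
  qed
  finally show ?thesis .
qed

lemma cube_Bx:
  assumes "0 \<le> lam"
  shows "(*\<^sub>R) lam ` unit_cube = Bx (\<lambda>_. lam / 2)"
proof (rule set_eqI, rule iffI)
  fix b :: "real^'n" assume "b \<in> (*\<^sub>R) lam ` unit_cube"
  then obtain u where u: "\<forall>i. \<bar>u$i\<bar> \<le> 1/2" "b = lam *\<^sub>R u" by (auto simp: unit_cube_def)
  have "\<bar>b$i\<bar> \<le> lam / 2" for i
  proof -
    have "\<bar>b$i\<bar> = lam * \<bar>u$i\<bar>" using u(2) assms by (simp add: abs_mult)
    also have "\<dots> \<le> lam * (1/2)" using u(1) assms by (intro mult_left_mono) auto
    finally show ?thesis by simp
  qed
  then show "b \<in> Bx (\<lambda>_. lam / 2)" by (simp add: Bx_def)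
next
  fix b :: "real^'n" assume b: "b \<in> Bx (\<lambda>_. lam / 2)"
  show "b \<in> (*\<^sub>R) lam ` unit_cube"
  proof (cases "lam = 0")
    case True
    then have "b = 0" using b by (auto simp: Bx_def vec_eq_iff)
    moreover have "(0::real^'n) \<in> unit_cube" by (simp add: unit_cube_def)
    ultimately show ?thesis using True by (auto intro!: image_eqI[of _ _ 0])
  next
    case False
    then have lp: "lam > 0" using assms by simp
    have "\<bar>(inverse lam *\<^sub>R b)$i\<bar> \<le> 1/2" for i
    proof -
      have "\<bar>(inverse lam *\<^sub>R b)$i\<bar> = \<bar>b$i\<bar> / lam" using lp by (simp add: abs_mult field_simps)
      also have "\<dots> \<le> (lam/2) / lam" using b lp by (intro divide_right_mono) (auto simp: Bx_def)
      also have "\<dots> = 1/2" using lp by simp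
      finally show ?thesis .
    qed
    then have "inverse lam *\<^sub>R b \<in> unit_cube" by (simp add: unit_cube_def)
    moreover have "b = lam *\<^sub>R (inverse lam *\<^sub>R b)" using lp by simp
    ultimately show ?thesis by blast
  qed
qed

lemma proj_cube:
  assumes "0 \<le> lam"
  shows "coord_proj P ` minkowski_sum X ((*\<^sub>R) lam ` unit_cube) = coord_proj P ` Tset X (aJ lam P)"
proof (rule set_eqI, rule iffI)
  fix f assume "f \<in> coord_proj P ` minkowski_sum X ((*\<^sub>R) lam ` unit_cube)"
  then obtain x b where x: "x \<in> X" and b: "b \<in> Bx (\<lambda>_. lam / 2)" and f: "f = coord_proj P (x + b)"
    unfolding cube_Bx[OF assms] minkowski_sum_def by blast
  define b' where "b' = (\<chi> i. if i \<in> P then b$i else 0)"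
  have "b' \<in> Bx (aJ lam P)" using b assms by (auto simp: Bx_def b'_def aJ_def)
  moreover have "f = coord_proj P (x + b')" unfolding f by (auto simp: coord_proj_def b'_def)
  ultimately show "f \<in> coord_proj P ` Tset X (aJ lam P)" using x unfolding Tset_def minkowski_sum_def by blast
next
  fix f assume "f \<in> coord_proj P ` Tset X (aJ lam P)"
  then obtain x b where x: "x \<in> X" and b: "b \<in> Bx (aJ lam P)" and f: "f = coord_proj P (x + b)"
    unfolding Tset_def minkowski_sum_def by blast
  have "b \<in> Bx (\<lambda>_. lam / 2)"
    unfolding Bx_def
  proof (intro CollectI allI)
    fix i show "\<bar>b$i\<bar> \<le> lam / 2" using b assms by (cases "i \<in> P") (auto simp: Bx_def aJ_def dest: spec[of _ i])
  qed
  then show "f \<in> coord_proj P ` minkowski_sum X ((*\<^sub>R) lam ` unit_cube)"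
    using x f unfolding cube_Bx[OF assms] minkowski_sum_def by blast
qed

lemma per_P:
  fixes X :: "(real^'n::finite) set"
  assumes X: "compact X" "boxpath X" and lam: "0 \<le> lam"
  shows "proj_vol P (minkowski_sum X ((*\<^sub>R) lam ` unit_cube)) =
         (\<Sum>R\<in>Pow P. proj_vol R X * lam ^ (card P - card R))"
proof -
  have "proj_vol P (minkowski_sum X ((*\<^sub>R) lam ` unit_cube)) =
        (\<Sum>S\<in>Pow P. measure (MM (P - S)) (coord_proj (P - S) ` X) * lam ^ card S)"
    unfolding proj_vol_def proj_cube[OF lam]
    by (rule sweep_formula[OF finite X lam]) simp_all
  also have "\<dots> = (\<Sum>R\<in>Pow P. proj_vol R X * lam ^ (card P - card R))"
  proof (rule sum.reindex_bij_witness[of _ "\<lambda>R. P - R" "\<lambda>R. P - R"])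
    fix R assume R: "R \<in> Pow P"
    show "P - (P - R) = R" using R by auto
    show "P - R \<in> Pow P" by auto
    have "card (P - R) = card P - card R" using R by (simp add: card_Diff_subset finite_subset)
    then have "card P - card (P - R) = card R" using R card_mono[of P R] by auto
    then show "proj_vol (P - R) X * lam ^ (card P - card (P - R)) = measure (MM (P - R)) (coord_proj (P - R) ` X) * lam ^ card R"
      by (simp add: proj_vol_def)
  qed auto
  finally show ?thesis .
qed

theorem theorem6p2:
  fixes X :: "(real^'n) set" and lam :: real
  assumes "compact X" and "l1_convex X" and "lam \<ge> 0"
  shows "(\<forall>k\<le>CARD('n).
           l1_intrinsic_volume k (minkowski_sum X ((*\<^sub>R) lam ` unit_cube)) =
           (\<Sum>i=0..k. real ((CARD('n) - i) choose (CARD('n) - k))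
                        * l1_intrinsic_volume i X * lam ^ (k - i)))
       \<and> measure lebesgue (minkowski_sum X ((*\<^sub>R) lam ` unit_cube)) =
           (\<Sum>i=0..CARD('n). l1_intrinsic_volume i X * lam ^ (CARD('n) - i))"
proof -
  have bp: "boxpath X" by (rule l1_convex_boxpath[OF assms(2)])
  define Y where "Y = minkowski_sum X ((*\<^sub>R) lam ` unit_cube)"
  have main: "l1_intrinsic_volume k Y =
           (\<Sum>i=0..k. real ((CARD('n) - i) choose (CARD('n) - k)) * l1_intrinsic_volume i X * lam ^ (k - i))"
    if k: "k \<le> CARD('n)" for k
  proof -
    have "l1_intrinsic_volume k Y = (\<Sum>P\<in>{P. card P = k}. \<Sum>R\<in>Pow P. proj_vol R X * lam ^ (card P - card R))"
      unfolding l1_intrinsic_volume_def Y_def by (rule sum.cong[OF refl]) (rule per_P[OF assms(1) bp assms(3)])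
    also have "\<dots> = (\<Sum>i=0..k. real ((CARD('n) - i) choose (CARD('n) - k)) * (\<Sum>R\<in>{R. card R = i}. proj_vol R X) * lam ^ (k - i))"
      by (rule combin[OF k])
    finally show ?thesis unfolding l1_intrinsic_volume_def .
  qed
  have cY: "compact Y"
    unfolding Y_def cube_Bx[OF assms(3)] minkowski_sum_def Bx_cbox by (intro compact_sums assms(1)) auto
  have "measure lebesgue Y = proj_vol UNIV Y" unfolding proj_vol_def by (rule lebesgue_vol[OF cY])
  also have "\<dots> = l1_intrinsic_volume (CARD('n)) Y"
  proof -
    have "{P :: 'n set. card P = CARD('n)} = {UNIV}"
      using card_subset_eq[OF finite_class.finite_UNIV subset_UNIV] by auto
    then show ?thesis by (simp add: l1_intrinsic_volume_def)
  qed
  also have "\<dots> = (\<Sum>i=0..CARD('n). l1_intrinsic_volume i X * lam ^ (CARD('n) - i))"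
    unfolding main[OF order_refl] by simp
  finally show ?thesis using main unfolding Y_def by blast
qed

end
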